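(* Let $k$ be an algebraically closed field complete with respect to a nontrivial non-Archimedean absolute value, with residue field $\tilde k$ of characteristic $p > 0$. Let $\varphi \in k(z)$ be a nonconstant rational function with good reduction such that all of the critical points of $\varphi$ have the same image in $\mathbb{P}^1(\tilde k)$ under the reduction map. Then $\deg(\varphi) \equiv 0$ or $1 \pmod p$.
   Context: $\mathcal{O}_k = \{x \in k : |x| \leq 1\}$, $\mathfrak{m} = \{x : |x| < 1\}$, $\tilde k = \mathcal{O}_k/\mathfrak{m}$. The reduction map $\mathrm{red} : \mathbb{P}^1(k) \to \mathbb{P}^1(\tilde k)$ sends $x \in \mathcal{O}_k$ to $x \bmod \mathfrak{m}$ and all other points to $\infty$. Write $\varphi = f/g$ with $f, g \in \mathcal{O}_k[z]$ having no common root and with some coefficient of $f$ or $g$ of absolute value $1$; let $\tilde f, \tilde g \in \tilde k[z]$ be their reductions. The reduction $\tilde\varphi$ is $\tilde f/\tilde g$ if $\tilde g \neq 0$ and the constant $\infty$ otherwise. $\varphi$ has good reduction if $\deg(\varphi) = \deg(\tilde \varphi)$. Critical points of $\varphi$ are the points $x \in \mathbb{P}^1(k)$ at which the derivative of $\sigma \circ \varphi$ (in a local coordinate at $x$, i.e. $z$ if $x$ finite and $1/z$ if $x=\infty$) vanishes, for a fractional linear $\sigma$ with $\sigma(\varphi(x)) \neq \infty$. *)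

theory Defs
  imports "HOL-Computational_Algebra.Computational_Algebra"
begin

definition nonarch_abs :: "('a::field \<Rightarrow> real) \<Rightarrow> bool" where
  "nonarch_abs av \<longleftrightarrow>
     (\<forall>x. av x \<ge> 0) \<and> (\<forall>x. av x = 0 \<longleftrightarrow> x = 0) \<and>
     (\<forall>x y. av (x * y) = av x * av y) \<and>
     (\<forall>x y. av (x + y) \<le> max (av x) (av y))"

definition nontrivial_abs :: "('a::field \<Rightarrow> real) \<Rightarrow> bool" where
  "nontrivial_abs av \<longleftrightarrow> (\<exists>x. x \<noteq> 0 \<and> av x \<noteq> 1)"

definition complete_abs :: "('a::field \<Rightarrow> real) \<Rightarrow> bool" where
  "complete_abs av \<longleftrightarrow>
     (\<forall>X :: nat \<Rightarrow> 'a.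
        (\<forall>e>0. \<exists>N. \<forall>m\<ge>N. \<forall>n\<ge>N. av (X m - X n) < e) \<longrightarrow>
        (\<exists>L. \<forall>e>0. \<exists>N. \<forall>n\<ge>N. av (X n - L) < e))"

definition alg_closed_field :: "'a::field itself \<Rightarrow> bool" where
  "alg_closed_field _ \<longleftrightarrow> (\<forall>q :: 'a poly. degree q \<ge> 1 \<longrightarrow> (\<exists>x. poly q x = 0))"

text \<open>The residue field: a field \<open>'b\<close> with a surjective ring homomorphism
 \<open>red : O_k \<rightarrow> 'b\<close> whose kernel is the maximal ideal; so \<open>'b \<cong> O_k/m\<close>.
 (Values of \<open>red\<close> outside \<open>O_k\<close> are irrelevant.)\<close>

definition residue_map :: "('a::field \<Rightarrow> real) \<Rightarrow> ('a \<Rightarrow> 'b::field) \<Rightarrow> bool" where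
  "residue_map av red \<longleftrightarrow>
     (\<forall>x y. av x \<le> 1 \<longrightarrow> av y \<le> 1 \<longrightarrow> red (x + y) = red x + red y) \<and>
     (\<forall>x y. av x \<le> 1 \<longrightarrow> av y \<le> 1 \<longrightarrow> red (x * y) = red x * red y) \<and>
     red 1 = 1 \<and>
     (\<forall>c. \<exists>x. av x \<le> 1 \<and> red x = c) \<and>
     (\<forall>x. av x \<le> 1 \<longrightarrow> (red x = 0 \<longleftrightarrow> av x < 1))"

text \<open>Reduction map \<open>P^1(k) \<rightarrow> P^1(k~)\<close>; points of \<open>P^1\<close> are \<open>Some x\<close> (finite) or
 \<open>None\<close> (\<open>\<infinity>\<close>).\<close>

definition red_pt :: "('a::field \<Rightarrow> real) \<Rightarrow> ('a \<Rightarrow> 'b::field) \<Rightarrow> 'a option \<Rightarrow> 'b option" where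
  "red_pt av red P = (case P of None \<Rightarrow> None
       | Some x \<Rightarrow> (if av x \<le> 1 then Some (red x) else None))"

text \<open>Degree of the rational function \<open>P/Q\<close> (after cancelling a common factor of maximal degree, i.e. the gcd).
 If \<open>Q = 0\<close> the function is the constant \<open>\<infinity>\<close>, of degree 0.\<close>

definition rat_deg :: "'a::field poly \<Rightarrow> 'a poly \<Rightarrow> nat" where
  "rat_deg P Q = (if Q = 0 then 0
     else max (degree P) (degree Q) - Max {degree h | h. h dvd P \<and> h dvd Q})"

text \<open>Local coordinate \<open>w = 1/z\<close> at \<open>\<infinity>\<close>: \<open>w^d P(1/w)\<close>.\<close>

definition at_infty :: "nat \<Rightarrow> 'a::field poly \<Rightarrow> 'a poly" where
  "at_infty d P = (\<Sum>i\<le>d. monom (coeff P i) (d - i))"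

text \<open>The derivative of \<open>\<sigma> \<circ> (P/Q)\<close> vanishes at the finite point \<open>x\<close> (in the
 coordinate \<open>z\<close>), for some fractional linear \<open>\<sigma>(w) = (a w + b)/(c w + e)\<close>
 with \<open>\<sigma>((P/Q)(x)) \<noteq> \<infinity>\<close>, i.e. with the denominator \<open>c P + e Q\<close> nonvanishing at
 \<open>x\<close>.  The derivative of the rational function \<open>N/D\<close> is \<open>(N' D - N D')/D^2\<close>.\<close>

definition crit_fin :: "'a::field poly \<Rightarrow> 'a poly \<Rightarrow> 'a \<Rightarrow> bool" where
  "crit_fin P Q x \<longleftrightarrow>
     (\<exists>a b c e. a * e - b * c \<noteq> 0 \<and>
        (let N = smult a P + smult b Q; D = smult c P + smult e Q in
          poly D x \<noteq> 0 \<and> poly (pderiv N * D - N * pderiv D) x = 0))"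

definition crit_points :: "'a::field poly \<Rightarrow> 'a poly \<Rightarrow> 'a option set" where
  "crit_points f g =
     {Some x | x. crit_fin f g x} \<union>
     (let d = max (degree f) (degree g) in
       if crit_fin (at_infty d f) (at_infty d g) 0 then {None} else {})"

end

theory Submission
  imports Defs
begin


lemma pderiv_deg_le: "degree (pderiv p) \<le> degree p - 1"
  by (rule degree_le) (auto simp: coeff_pderiv coeff_eq_0)

lemma wr_coeff1:
  fixes f g :: "'a::idom poly"
  assumes f: "degree f \<le> Suc (Suc k)" and g: "degree g \<le> Suc (Suc k)"
  shows "coeff (pderiv f * g) (2*k+2) = of_nat (k+1) * coeff f (k+1) * coeff g (k+2) + of_nat (k+2) * coeff f (k+2) * coeff g (k+1)"
proof -
  have "coeff (pderiv f * g) (2*k+2) = (\<Sum>i\<in>{k,k+1}. coeff (pderiv f) i * coeff g (2*k+2-i))"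
    unfolding coeff_mult
  proof (rule sum.mono_neutral_right)
    show "\<forall>i\<in>{..2 * k + 2} - {k, k + 1}. coeff (pderiv f) i * coeff g (2 * k + 2 - i) = 0"
    proof
      fix i assume i: "i \<in> {..2 * k + 2} - {k, k + 1}"
      show "coeff (pderiv f) i * coeff g (2 * k + 2 - i) = 0"
      proof (cases "i < k")
        case True then have "coeff g (2 * k + 2 - i) = 0" using g by (intro coeff_eq_0) auto
        then show ?thesis by simp
      next
        case False then have "coeff f (Suc i) = 0" using f i by (intro coeff_eq_0) auto
        then show ?thesis by (simp add: coeff_pderiv)
      qed
    qed
  qed auto
  also have "\<dots> = of_nat (k+1) * coeff f (k+1) * coeff g (k+2) + of_nat (k+2) * coeff f (k+2) * coeff g (k+1)"
    by (simp add: coeff_pderiv mult_2 add.commute add.left_commute)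
  finally show ?thesis .
qed

lemma wr_coeff2:
  fixes f g :: "'a::idom poly"
  assumes f: "degree f \<le> Suc (Suc k)" and g: "degree g \<le> Suc (Suc k)"
  shows "coeff (f * pderiv g) (2*k+2) = of_nat (k+2) * coeff f (k+1) * coeff g (k+2) + of_nat (k+1) * coeff f (k+2) * coeff g (k+1)"
proof -
  have "coeff (f * pderiv g) (2*k+2) = (\<Sum>i\<in>{k+1,k+2}. coeff f i * coeff (pderiv g) (2*k+2-i))"
    unfolding coeff_mult
  proof (rule sum.mono_neutral_right)
    show "\<forall>i\<in>{..2 * k + 2} - {k+1, k + 2}. coeff f i * coeff (pderiv g) (2 * k + 2 - i) = 0"
    proof
      fix i assume i: "i \<in> {..2 * k + 2} - {k+1, k + 2}"
      show "coeff f i * coeff (pderiv g) (2 * k + 2 - i) = 0"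
      proof (cases "i < k+1")
        case True then have "coeff g (Suc (2 * k + 2 - i)) = 0" using g by (intro coeff_eq_0) auto
        then show ?thesis by (simp add: coeff_pderiv)
      next
        case False then have "coeff f i = 0" using f i by (intro coeff_eq_0) auto
        then show ?thesis by simp
      qed
    qed
  qed auto
  also have "\<dots> = of_nat (k+2) * coeff f (k+1) * coeff g (k+2) + of_nat (k+1) * coeff f (k+2) * coeff g (k+1)"
    by (simp add: coeff_pderiv mult_2 add.commute add.left_commute numeral_2_eq_2)
  finally show ?thesis .
qed

lemma wr_top:
  fixes f g :: "'a::idom poly"
  assumes f: "degree f \<le> Suc (Suc k)" and g: "degree g \<le> Suc (Suc k)"
  shows "coeff (pderiv f * g - f * pderiv g) (2*k+2) = coeff f (k+2) * coeff g (k+1) - coeff f (k+1) * coeff g (k+2)"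
  unfolding coeff_diff wr_coeff1[OF f g] wr_coeff2[OF f g]
  by (simp add: algebra_simps)

lemma wr_above:
  fixes f g :: "'a::idom poly"
  assumes f: "degree f \<le> Suc (Suc k)" and g: "degree g \<le> Suc (Suc k)" and m: "m > 2*k+2"
  shows "coeff (pderiv f * g - f * pderiv g) m = 0"
proof -
  have A: "coeff (pderiv f * g) m = (\<Sum>i\<in>{k+1}. coeff (pderiv f) i * coeff g (m-i))"
    unfolding coeff_mult
  proof (rule sum.mono_neutral_right)
    show "\<forall>i\<in>{..m} - {k+1}. coeff (pderiv f) i * coeff g (m - i) = 0"
    proof
      fix i assume i: "i \<in> {..m} - {k+1}"
      show "coeff (pderiv f) i * coeff g (m - i) = 0"
      proof (cases "i < k+1")
        case True then have "coeff g (m - i) = 0" using g m by (intro coeff_eq_0) auto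
        then show ?thesis by simp
      next
        case False then have "coeff f (Suc i) = 0" using f i by (intro coeff_eq_0) auto
        then show ?thesis by (simp add: coeff_pderiv)
      qed
    qed
  qed (use m in auto)
  have B: "coeff (f * pderiv g) m = (\<Sum>i\<in>{k+2}. coeff f i * coeff (pderiv g) (m-i))"
    unfolding coeff_mult
  proof (rule sum.mono_neutral_right)
    show "\<forall>i\<in>{..m} - {k + 2}. coeff f i * coeff (pderiv g) (m - i) = 0"
    proof
      fix i assume i: "i \<in> {..m} - {k + 2}"
      show "coeff f i * coeff (pderiv g) (m - i) = 0"
      proof (cases "i < k+2")
        case True then have "coeff g (Suc (m - i)) = 0" using g m by (intro coeff_eq_0) auto
        then show ?thesis by (simp add: coeff_pderiv)
      next
        case False then have "coeff f i = 0" using f i by (intro coeff_eq_0) auto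
        then show ?thesis by simp
      qed
    qed
  qed (use m in auto)
  show ?thesis
  proof (cases "m = 2*k+3")
    case True
    then show ?thesis unfolding coeff_diff A B
      by (simp add: coeff_pderiv numeral_3_eq_3 numeral_2_eq_2 algebra_simps)
  next
    case False
    then have "coeff g (m - (k+1)) = 0" "coeff g (Suc (m - (k+2))) = 0" using g m by (auto intro!: coeff_eq_0)
    then show ?thesis unfolding coeff_diff A B by (simp add: coeff_pderiv)
  qed
qed



lemma crit_of_root:
  fixes f g :: "'a::field poly"
  assumes "poly (pderiv f * g - f * pderiv g) x = 0" "\<not> (poly f x = 0 \<and> poly g x = 0)"
  shows "crit_fin f g x"
proof (cases "poly g x = 0")
  case False
  show ?thesis unfolding crit_fin_def
    by (rule exI[of _ 1], rule exI[of _ 0], rule exI[of _ 0], rule exI[of _ 1]) (use assms False in simp)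
next
  case True
  then have "poly f x \<noteq> 0" using assms by auto
  show ?thesis unfolding crit_fin_def
    by (rule exI[of _ 0], rule exI[of _ 1], rule exI[of _ 1], rule exI[of _ 0])
       (use assms \<open>poly f x \<noteq> 0\<close> in \<open>auto simp: algebra_simps\<close>)
qed

lemma poly_pderiv_0: "poly (pderiv p) 0 = coeff p 1"
  by (simp add: poly_0_coeff_0 coeff_pderiv)

lemma noncrit_0:
  fixes F G :: "'a::field poly"
  assumes "\<not> crit_fin F G 0" "\<not> (coeff F 0 = 0 \<and> coeff G 0 = 0)"
  shows "coeff F 1 * coeff G 0 - coeff F 0 * coeff G 1 \<noteq> 0"
proof (cases "coeff G 0 = 0")
  case False
  have "\<not> (poly (pderiv F * G - F * pderiv G) 0 = 0)"
    using assms(1) False unfolding crit_fin_def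
    apply (simp add: Let_def)
    apply (drule spec[of _ 1], drule spec[of _ 0], drule spec[of _ 0], drule spec[of _ 1])
    by (simp add: poly_0_coeff_0)
  then show ?thesis by (simp add: poly_0_coeff_0 coeff_mult_0 coeff_pderiv)
next
  case True
  then have "coeff F 0 \<noteq> 0" using assms by auto
  have "\<not> (poly (pderiv G * F - G * pderiv F) 0 = 0)"
    using assms(1) \<open>coeff F 0 \<noteq> 0\<close> unfolding crit_fin_def
    apply (simp add: Let_def)
    apply (drule spec[of _ 0], drule spec[of _ 1], drule spec[of _ 1], drule spec[of _ 0])
    by (simp add: poly_0_coeff_0)
  then show ?thesis using True by (simp add: poly_0_coeff_0 coeff_mult_0 coeff_pderiv)
qed

lemma coeff_at_infty: "coeff (at_infty d P) j = (if j \<le> d then coeff P (d - j) else 0)"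
proof -
  have "coeff (at_infty d P) j = (\<Sum>i\<le>d. if i = d - j \<and> j \<le> d then coeff P i else 0)"
    unfolding at_infty_def coeff_sum coeff_monom
    by (intro sum.cong) auto
  also have "\<dots> = (if j \<le> d then coeff P (d - j) else 0)"
    by (cases "j \<le> d") (simp_all add: sum.delta)
  finally show ?thesis .
qed



locale vr =
  fixes av :: "'a::field \<Rightarrow> real" and red :: "'a \<Rightarrow> 'b::field"
  assumes na: "nonarch_abs av" and rm: "residue_map av red"
begin

lemma av_nonneg: "av x \<ge> 0" using na by (simp add: nonarch_abs_def)
lemma av_0_iff: "av x = 0 \<longleftrightarrow> x = 0" using na by (simp add: nonarch_abs_def)
lemma av_mult: "av (x*y) = av x * av y" using na by (simp add: nonarch_abs_def)
lemma av_add: "av (x+y) \<le> max (av x) (av y)" using na unfolding nonarch_abs_def by blast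
lemma av_0 [simp]: "av 0 = 0" using av_0_iff by simp
lemma av_1 [simp]: "av 1 = 1"
proof -
  have "av 1 = av 1 * av 1" using av_mult[of 1 1] by simp
  moreover have "av 1 \<noteq> 0" using av_0_iff by simp
  ultimately show ?thesis by (metis mult_cancel_right1)
qed
lemma av_minus1: "av (-1) = 1"
proof -
  have "av (-1) * av (-1) = 1" using av_mult[of "-1" "-1"] by simp
  then show ?thesis using av_nonneg[of "-1"]
    by (metis abs_of_nonneg abs_mult_self_eq mult_1_left mult_cancel_left1 mult_cancel_right2 nonzero_eq_divide_eq real_sqrt_abs2 real_sqrt_one zero_neq_one)
qed
lemma av_uminus [simp]: "av (-x) = av x"
  using av_mult[of "-1" x] av_minus1 by simp

lemma O_add: "av x \<le> 1 \<Longrightarrow> av y \<le> 1 \<Longrightarrow> av (x+y) \<le> 1"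
  using av_add[of x y] by simp
lemma O_mult: "av x \<le> 1 \<Longrightarrow> av y \<le> 1 \<Longrightarrow> av (x*y) \<le> 1"
  using av_mult[of x y] av_nonneg[of x] av_nonneg[of y] by (simp add: mult_le_one)
lemma O_diff: "av x \<le> 1 \<Longrightarrow> av y \<le> 1 \<Longrightarrow> av (x-y) \<le> 1"
  using O_add[of x "-y"] by simp
lemma O_of_nat: "av (of_nat n) \<le> 1"
  by (induction n) (auto intro: O_add)
lemma O_sum: "(\<And>i. i \<in> A \<Longrightarrow> av (h i) \<le> 1) \<Longrightarrow> av (sum h A) \<le> 1"
  by (induction A rule: infinite_finite_induct) (auto intro: O_add)

lemma red_add: "av x \<le> 1 \<Longrightarrow> av y \<le> 1 \<Longrightarrow> red (x+y) = red x + red y"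
  using rm unfolding residue_map_def by blast
lemma red_mult: "av x \<le> 1 \<Longrightarrow> av y \<le> 1 \<Longrightarrow> red (x*y) = red x * red y"
  using rm unfolding residue_map_def by blast
lemma red_1 [simp]: "red 1 = 1" using rm unfolding residue_map_def by blast
lemma red_zero_iff: "av x \<le> 1 \<Longrightarrow> red x = 0 \<longleftrightarrow> av x < 1"
  using rm unfolding residue_map_def by blast
lemma red_0 [simp]: "red 0 = 0"
proof -
  have "red 0 + red 0 = red 0 + 0" using red_add[of 0 0] by simp
  then show ?thesis by (rule add_left_imp_eq)
qed
lemma red_uminus: "av x \<le> 1 \<Longrightarrow> red (-x) = - red x"
  using red_add[of x "-x"] by (simp add: eq_neg_iff_add_eq_0 add.commute)
lemma red_diff: "av x \<le> 1 \<Longrightarrow> av y \<le> 1 \<Longrightarrow> red (x-y) = red x - red y"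
  using red_add[of x "-y"] red_uminus[of y] by simp
lemma red_of_nat: "red (of_nat n) = of_nat n"
  by (induction n) (simp_all add: red_add O_of_nat)
lemma red_sum: "(\<And>i. i \<in> A \<Longrightarrow> av (h i) \<le> 1) \<Longrightarrow> red (sum h A) = (\<Sum>i\<in>A. red (h i))"
  by (induction A rule: infinite_finite_induct) (auto simp: red_add O_sum)

definition okp :: "'a poly \<Rightarrow> bool" where "okp p \<longleftrightarrow> (\<forall>i. av (coeff p i) \<le> 1)"

lemma coeff_red: "coeff (map_poly red p) n = red (coeff p n)"
  by (simp add: coeff_map_poly)

lemma okp_add: "okp p \<Longrightarrow> okp q \<Longrightarrow> okp (p+q)" unfolding okp_def by (auto intro: O_add)
lemma okp_diff: "okp p \<Longrightarrow> okp q \<Longrightarrow> okp (p-q)" unfolding okp_def by (auto intro: O_diff)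
lemma okp_mult: "okp p \<Longrightarrow> okp q \<Longrightarrow> okp (p*q)" unfolding okp_def
  by (auto simp: coeff_mult intro!: O_sum O_mult)
lemma okp_pderiv: "okp p \<Longrightarrow> okp (pderiv p)" unfolding okp_def
  by (auto simp: coeff_pderiv intro!: O_mult O_of_nat simp del: of_nat_Suc)

lemma red_padd: "okp p \<Longrightarrow> okp q \<Longrightarrow> map_poly red (p+q) = map_poly red p + map_poly red q"
  unfolding okp_def by (intro poly_eqI) (simp add: coeff_red red_add)
lemma red_pdiff: "okp p \<Longrightarrow> okp q \<Longrightarrow> map_poly red (p-q) = map_poly red p - map_poly red q"
  unfolding okp_def by (intro poly_eqI) (simp add: coeff_red red_diff)
lemma red_pmult: "okp p \<Longrightarrow> okp q \<Longrightarrow> map_poly red (p*q) = map_poly red p * map_poly red q"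
  unfolding okp_def by (intro poly_eqI) (simp add: coeff_red coeff_mult red_sum O_mult red_mult)
lemma red_pderiv: "okp p \<Longrightarrow> map_poly red (pderiv p) = pderiv (map_poly red p)"
  unfolding okp_def by (intro poly_eqI) (simp add: coeff_red coeff_pderiv red_mult O_of_nat red_of_nat del: of_nat_Suc)
lemma red_smult: "av a \<le> 1 \<Longrightarrow> okp p \<Longrightarrow> map_poly red (smult a p) = smult (red a) (map_poly red p)"
  unfolding okp_def by (intro poly_eqI) (simp add: coeff_red red_mult)

end


lemma root_split:
  fixes P :: "'a::field poly"
  assumes ac: "alg_closed_field TYPE('a)" and d: "degree P = Suc n"
  shows "\<exists>r Q. P = [:-r,1:] * Q \<and> Q \<noteq> 0 \<and> degree Q = n \<and> (\<forall>x. poly Q x = 0 \<longrightarrow> poly P x = 0)"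
proof -
  obtain r where r: "poly P r = 0" using ac d unfolding alg_closed_field_def by force
  then obtain Q where Q: "P = [:-r,1:] * Q" using poly_eq_0_iff_dvd by blast
  have "P \<noteq> 0" using d by auto
  then have "Q \<noteq> 0" using Q by auto
  have "degree ([:-r,1:] * Q) = degree [:-r,1:] + degree Q" using \<open>Q \<noteq> 0\<close> by (intro degree_mult_eq) auto
  then have "degree P = 1 + degree Q" using Q by simp
  then have "degree Q = n" using d by simp
  then show ?thesis using Q \<open>Q \<noteq> 0\<close> by (auto simp: poly_mult)
qed


context vr begin

lemma large_roots:
  assumes ac: "alg_closed_field TYPE('a)"
  shows "P \<noteq> 0 \<Longrightarrow> (\<forall>r. poly P r = 0 \<longrightarrow> av r > 1) \<Longrightarrow> 0 < j \<Longrightarrow> av (coeff P j) < av (coeff P 0)"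
proof (induction "degree P" arbitrary: P j)
  case 0
  then have "coeff P j = 0" by (intro coeff_eq_0) auto
  moreover have "coeff P 0 \<noteq> 0" using 0 by (metis leading_coeff_0_iff)
  ultimately show ?case using av_0_iff av_nonneg by (metis av_0 order_le_neq_trans)
next
  case (Suc n)
  obtain r Q where Q: "P = [:-r,1:] * Q" "Q \<noteq> 0" "degree Q = n" "\<forall>x. poly Q x = 0 \<longrightarrow> poly P x = 0"
    using root_split[OF ac Suc(2)[symmetric]] by blast
  have rt: "\<forall>x. poly Q x = 0 \<longrightarrow> av x > 1" using Q(4) Suc(4) by blast
  have r1: "av r > 1" using Suc(4) Q(1) by (simp add: poly_mult)
  have IH: "\<And>j. 0 < j \<Longrightarrow> av (coeff Q j) < av (coeff Q 0)"
    using Suc(1)[of Q] Q(2,3) rt by auto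
  have q0: "coeff Q 0 \<noteq> 0" using rt by (metis av_0 not_one_less_zero poly_0_coeff_0)
  then have q0p: "av (coeff Q 0) > 0" using av_0_iff av_nonneg by (metis order_le_neq_trans)
  have c0: "coeff P 0 = -r * coeff Q 0" using Q(1) by simp
  obtain i where j: "j = Suc i" using Suc(5) by (cases j) auto
  have cj: "coeff P j = -r * coeff Q (Suc i) + coeff Q i" using Q(1) j by simp
  have a1: "av (-r * coeff Q (Suc i)) < av (coeff P 0)"
    unfolding c0 av_mult using IH[of "Suc i"] r1 by simp
  have "av (coeff Q i) \<le> av (coeff Q 0)" using IH[of i] by (cases i) auto
  also have "\<dots> < av r * av (coeff Q 0)" using r1 q0p by simp
  finally have a2: "av (coeff Q i) < av (coeff P 0)" unfolding c0 av_mult by simp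
  show ?case unfolding cj using av_add[of "-r * coeff Q (Suc i)" "coeff Q i"] a1 a2 by linarith
qed

lemma okp_1: "okp 1" unfolding okp_def by (simp add: coeff_1)

lemma small_roots:
  assumes ac: "alg_closed_field TYPE('a)"
  shows "P \<noteq> 0 \<Longrightarrow> (\<forall>r. poly P r = 0 \<longrightarrow> av r \<le> 1 \<and> red r = c) \<Longrightarrow>
    \<exists>Q. P = smult (lead_coeff P) Q \<and> okp Q \<and> map_poly red Q = [:-c,1:]^degree P"
proof (induction "degree P" arbitrary: P)
  case 0
  then obtain a where "P = [:a:]" by (metis degree_eq_zeroE)
  moreover have "map_poly red 1 = 1" by (intro poly_eqI) (simp add: coeff_red coeff_1)
  ultimately show ?case using okp_1 by (intro exI[of _ 1]) simp
next
  case (Suc n)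
  obtain r P1 where Q: "P = [:-r,1:] * P1" "P1 \<noteq> 0" "degree P1 = n" "\<forall>x. poly P1 x = 0 \<longrightarrow> poly P x = 0"
    using root_split[OF ac Suc(2)[symmetric]] by blast
  have r: "av r \<le> 1" "red r = c" using Suc(4) Q(1) by (auto simp: poly_mult)
  obtain Q1 where Q1: "P1 = smult (lead_coeff P1) Q1" "okp Q1" "map_poly red Q1 = [:-c,1:]^n"
    using Suc(1)[of P1] Q Suc(4) by auto
  have lc: "lead_coeff P = lead_coeff P1" unfolding Q(1) lead_coeff_mult by simp
  have okl: "okp [:-r,1:]" unfolding okp_def using r by (auto simp: coeff_pCons split: nat.split)
  have rl: "map_poly red [:-r,1:] = [:-c,1:]"
    by (intro poly_eqI) (auto simp: coeff_red coeff_pCons red_uminus r split: nat.split)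
  show ?case
  proof (intro exI[of _ "[:-r,1:] * Q1"] conjI)
    show "P = smult (lead_coeff P) ([:- r, 1:] * Q1)" using Q(1) Q1(1) lc
      by (metis mult_smult_right)
    show "okp ([:- r, 1:] * Q1)" using okl Q1(2) by (rule okp_mult)
    show "map_poly red ([:- r, 1:] * Q1) = [:- c, 1:] ^ degree P"
      unfolding red_pmult[OF okl Q1(2)] rl Q1(3) Suc(2)[symmetric] power_Suc by (rule refl)
  qed
qed

end


lemma pderiv_wr: "pderiv (pderiv f * g - f * pderiv g) = pderiv (pderiv f) * g - f * pderiv (pderiv (g :: 'a::idom poly))"
  by (simp add: pderiv_diff pderiv_mult algebra_simps)

lemma pderiv_deg_le': "degree (pderiv p) \<le> degree p - 1"
  by (rule degree_le) (auto simp: coeff_pderiv coeff_eq_0)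

lemma dd0:
  fixes p :: "'b::field poly"
  assumes "p dvd pderiv (pderiv p)" shows "pderiv (pderiv p) = 0"
proof (rule ccontr)
  assume ne: "pderiv (pderiv p) \<noteq> 0"
  have "degree p \<le> degree (pderiv (pderiv p))" using dvd_imp_degree_le[OF assms ne] .
  also have "\<dots> \<le> degree p - 1 - 1" using pderiv_deg_le'[of "pderiv p"] pderiv_deg_le'[of p] by linarith
  finally have "degree p = 0" by simp
  then obtain a where "p = [:a:]" by (metis degree_eq_zeroE)
  then show False using ne by (simp add: pderiv_pCons)
qed

lemma bezout_field:
  fixes f g :: "'b::field poly"
  assumes g0: "g \<noteq> 0" and cd: "\<forall>h. h dvd f \<and> h dvd g \<longrightarrow> degree h = 0"
  shows "\<exists>a b. a*f + b*g = 1"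
proof -
  let ?P = "\<lambda>n. \<exists>a b. a*f + b*g \<noteq> 0 \<and> degree (a*f+b*g) = n"
  have P0: "?P (degree g)" by (rule exI[of _ 0], rule exI[of _ 1]) (simp add: g0)
  define n where "n = (LEAST n. ?P n)"
  have "?P n" unfolding n_def by (rule LeastI[of ?P, OF P0])
  then obtain a b where h: "a*f + b*g \<noteq> 0" "degree (a*f+b*g) = n" by blast
  define h where "h = a*f + b*g"
  have dv: "h dvd c*f + e*g" for c e
  proof -
    define q where "q = c*f + e*g"
    have r: "q mod h = (c - (q div h)*a)*f + (e - (q div h)*b)*g"
      using div_mult_mod_eq[of q h] unfolding q_def h_def by (simp add: algebra_simps)
    have "q mod h = 0"
    proof (rule ccontr)
      assume ne: "q mod h \<noteq> 0"
      then have "degree (q mod h) < degree h" using degree_mod_less' h(1) unfolding h_def by blast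
      moreover have "?P (degree (q mod h))"
        by (rule exI[of _ "c - q div h * a"], rule exI[of _ "e - q div h * b"]) (simp add: ne r[symmetric])
      then have "n \<le> degree (q mod h)" unfolding n_def by (rule Least_le)
      ultimately show False using h(2) unfolding h_def by simp
    qed
    then show ?thesis unfolding q_def by (simp add: mod_eq_0_iff_dvd)
  qed
  have "h dvd f" using dv[of 1 0] by simp
  moreover have "h dvd g" using dv[of 0 1] by simp
  ultimately have "degree h = 0" using cd by blast
  then obtain c where hc: "h = [:c:]" by (metis degree_eq_zeroE)
  then have c0: "c \<noteq> 0" using h(1) unfolding h_def by auto
  have "smult (1/c) a * f + smult (1/c) b * g = smult (1/c) h" unfolding h_def by (simp add: smult_add_right)
  also have "\<dots> = 1" using hc c0 by (simp add: one_pCons)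
  finally show ?thesis by blast
qed

lemma bez_dvd:
  fixes f g :: "'b::field poly"
  assumes "a*f + b*g = 1" and "f dvd X*g" shows "f dvd X"
proof -
  obtain q where q: "X*g = f*q" using assms(2) by blast
  have "X = X*(a*f + b*g)" using assms(1) by simp
  also have "\<dots> = f*(X*a + b*q)" using q by (simp add: algebra_simps)
  finally have "X = f*(X*a + b*q)" .
  then show ?thesis by (rule dvdI)
qed

lemma bez_no_common_root:
  fixes f g :: "'b::field poly"
  assumes "a*f + b*g = 1" shows "\<not> (poly f c = 0 \<and> poly g c = 0)"
proof
  assume "poly f c = 0 \<and> poly g c = 0"
  then have "poly (a*f + b*g) c = 0" by simp
  then show False using assms by simp
qed

lemma max_deg_lc:
  fixes f g :: "'b::field poly"
  assumes "max (degree f) (degree g) = Suc (Suc k)"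
  shows "coeff f (k+2) \<noteq> 0 \<or> coeff g (k+2) \<noteq> 0"
proof (cases "degree f = Suc (Suc k)")
  case True
  then have "f \<noteq> 0" by auto
  then have "coeff f (degree f) \<noteq> 0" by simp
  then show ?thesis using True by simp
next
  case False
  then have dg: "degree g = Suc (Suc k)" using assms by (simp add: max_def split: if_splits)
  then have "g \<noteq> 0" by auto
  then have "coeff g (degree g) \<noteq> 0" by simp
  then show ?thesis using dg by simp
qed

lemma res_case1:
  fixes f g :: "'b::field poly"
  assumes cop: "a*f + b*g = 1" and dm: "max (degree f) (degree g) = Suc (Suc k)"
    and W: "pderiv (pderiv f * g - f * pderiv g) = 0"
  shows "(of_nat ((k+1)*(k+2)) :: 'b) = 0"
proof -
  have e: "pderiv (pderiv f) * g = f * pderiv (pderiv g)" using W unfolding pderiv_wr by (simp only: right_minus_eq)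
  have "f dvd pderiv (pderiv f) * g" unfolding e by simp
  then have "f dvd pderiv (pderiv f)" using bez_dvd[OF cop] by blast
  then have f0: "pderiv (pderiv f) = 0" by (rule dd0)
  have e2: "pderiv (pderiv g) * f = g * pderiv (pderiv f)" using e by (simp add: mult.commute)
  have "g dvd pderiv (pderiv g) * f" unfolding e2 by simp
  moreover have "b*g + a*f = 1" using cop by (simp add: add.commute)
  ultimately have "g dvd pderiv (pderiv g)" using bez_dvd by blast
  then have g0: "pderiv (pderiv g) = 0" by (rule dd0)
  have cf: "of_nat (Suc k) * (of_nat (Suc (Suc k)) * coeff f (k+2)) = (0::'b)"
    using arg_cong[OF f0, of "\<lambda>p. coeff p k"] by (simp add: coeff_pderiv del: of_nat_Suc)
  have cg: "of_nat (Suc k) * (of_nat (Suc (Suc k)) * coeff g (k+2)) = (0::'b)"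
    using arg_cong[OF g0, of "\<lambda>p. coeff p k"] by (simp add: coeff_pderiv del: of_nat_Suc)
  have "(of_nat (Suc k) * of_nat (Suc (Suc k)) :: 'b) = 0"
  proof (cases "coeff f (k+2) = 0")
    case True
    then have "coeff g (k+2) \<noteq> 0" using max_deg_lc[OF dm] by blast
    then show ?thesis using cg by (simp del: of_nat_Suc)
  next
    case False
    then show ?thesis using cf by (simp del: of_nat_Suc)
  qed
  moreover have "(k+1)*(k+2) = Suc k * Suc (Suc k)" by simp
  ultimately show ?thesis by (simp only: of_nat_mult)
qed

lemma xq: "coeff ([:-c,1:] * q) (Suc n) = coeff q n - c * (coeff q (Suc n) :: 'a::comm_ring_1)" by (simp add: algebra_simps)

lemma sm: "smult a p = [:a:] * p" by simp

definition Lop :: "'b::field \<Rightarrow> nat \<Rightarrow> 'b poly \<Rightarrow> 'b poly" where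
  "Lop c k p = [:-c,1:] * ([:-c,1:] * pderiv (pderiv p)) - smult (of_nat (2*(k+1))) ([:-c,1:] * pderiv p)
     + smult (of_nat ((k+2)*(k+1))) p"

lemma Lop_ident:
  "Lop c k f * g - f * Lop c k g = [:-c,1:] * ([:-c,1:] * (pderiv (pderiv f) * g - f * pderiv (pderiv g)))
     - smult (of_nat (2*(k+1))) ([:-c,1:] * (pderiv f * g - f * pderiv g))"
  unfolding Lop_def sm by algebra

lemma Lop_poly: "poly (Lop c k p) c = of_nat ((k+2)*(k+1)) * poly p c"
proof -
  have x0: "poly [:-c,1:] c = 0" by simp
  show ?thesis unfolding Lop_def poly_add poly_diff poly_mult poly_smult x0 mult_zero_left diff_zero add_0 mult_zero_right
    by (rule refl)
qed

lemma Lop_coeff: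
  fixes p :: "'b::field poly"
  assumes d: "degree p \<le> k+2" and m: "m \<ge> k+2"
  shows "coeff (Lop c k p) m = 0"
proof -
  define j where "j = m - 2"
  have j: "m = Suc (Suc j)" "j \<ge> k" using m unfolding j_def by auto
  have z3: "coeff p (Suc (Suc (Suc j))) = 0" "coeff p (Suc (Suc (Suc (Suc j)))) = 0" using d j by (auto intro!: coeff_eq_0)
  have A: "coeff ([:-c,1:] * ([:-c,1:] * pderiv (pderiv p))) (Suc (Suc j)) = of_nat (Suc j) * of_nat (Suc (Suc j)) * coeff p (Suc (Suc j))"
    unfolding xq using z3 by (simp add: coeff_pderiv del: of_nat_Suc)
  have B: "coeff ([:-c,1:] * pderiv p) (Suc (Suc j)) = of_nat (Suc (Suc j)) * coeff p (Suc (Suc j))"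
    unfolding xq using z3 by (simp add: coeff_pderiv del: of_nat_Suc)
  have "coeff (Lop c k p) m = (of_nat (Suc j) * of_nat (Suc (Suc j)) - of_nat (2*(k+1)) * of_nat (Suc (Suc j)) + of_nat ((k+2)*(k+1))) * coeff p (Suc (Suc j))"
    unfolding Lop_def j coeff_add coeff_diff coeff_smult A B by (simp add: algebra_simps del: of_nat_Suc)
  also have "\<dots> = 0"
  proof (cases "j = k")
    case True 
    have "(of_nat (Suc j) * of_nat (Suc (Suc j)) - of_nat (2*(k+1)) * of_nat (Suc (Suc j)) + of_nat ((k+2)*(k+1)) :: 'b) = 0"
      unfolding True by (simp add: algebra_simps)
    then show ?thesis by simp
  next
    case False then have "coeff p (Suc (Suc j)) = 0" using d j by (intro coeff_eq_0) auto
    then show ?thesis by simp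
  qed
  finally show ?thesis .
qed



lemma Lop_deg:
  fixes p :: "'b::field poly"
  assumes "degree p \<le> k+2" shows "degree (Lop c k p) \<le> k+1"
  by (rule degree_le) (use Lop_coeff[OF assms] in auto)

lemma L_zero_aux:
  fixes f g :: "'b::field poly"
  assumes cop: "a*f + b*g = 1" and df: "degree f = k+2" and dg: "degree g \<le> k+2"
    and e: "Lop c k f * g = f * Lop c k g"
  shows "Lop c k f = 0 \<and> Lop c k g = 0"
proof -
  have "f dvd Lop c k f * g" unfolding e by simp
  then have dv: "f dvd Lop c k f" using bez_dvd[OF cop] by blast
  have Lf: "Lop c k f = 0"
  proof (rule ccontr)
    assume "Lop c k f \<noteq> 0"
    then have "degree f \<le> degree (Lop c k f)" using dvd_imp_degree_le[OF dv] by blast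
    then show False using Lop_deg[of f k c] df by simp
  qed
  have "f \<noteq> 0" using df by auto
  then have "Lop c k g = 0" using e Lf by simp
  then show ?thesis using Lf by simp
qed

lemma res_case2:
  fixes f g :: "'b::field poly"
  assumes cop: "a*f + b*g = 1" and dm: "max (degree f) (degree g) = Suc (Suc k)"
    and W: "pderiv f * g - f * pderiv g = smult u ([:-c,1:]^(2*k+2))"
  shows "(of_nat ((k+1)*(k+2)) :: 'b) = 0"
proof -
  define x where "x = ([:-c,1:] :: 'b poly)"
  define n where "n = 2*k+1"
  have n2: "2*k+2 = Suc n" "2*(k+1) = Suc n" unfolding n_def by simp_all
  have W': "pderiv f * g - f * pderiv g = smult u (x^Suc n)" using W unfolding x_def n2 .
  have px: "pderiv x = 1" unfolding x_def by (simp add: pderiv_pCons one_pCons)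
  have pw: "pderiv (pderiv f) * g - f * pderiv (pderiv g) = smult u (smult (of_nat (Suc n)) (x^n))"
    unfolding pderiv_wr[symmetric] W' pderiv_smult pderiv_power_Suc px by simp
  have xx: "x * (x * x^n) = x^Suc (Suc n)" "x * x^Suc n = x^Suc (Suc n)" by simp_all
  have e0: "Lop c k f * g - f * Lop c k g = 0"
    unfolding Lop_ident x_def[symmetric] pw W' n2 mult_smult_right xx by (simp add: mult.commute)
  then have e: "Lop c k f * g = f * Lop c k g" by simp
  have L: "Lop c k f = 0 \<and> Lop c k g = 0"
  proof (cases "degree f = k+2")
    case True then show ?thesis using L_zero_aux[OF cop True _ e] dm by simp
  next
    case False
    then have dg: "degree g = k+2" "degree f \<le> k+2" using dm by (auto simp: max_def split: if_splits)
    have "Lop c k g * f = g * Lop c k f" using e by (simp add: mult.commute)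
    moreover have "b*g + a*f = 1" using cop by (simp add: add.commute)
    ultimately show ?thesis using L_zero_aux[OF _ dg(1) dg(2)] by blast
  qed
  have "(of_nat ((k+2)*(k+1)) :: 'b) * poly f c = 0" "(of_nat ((k+2)*(k+1)) :: 'b) * poly g c = 0"
    using L Lop_poly[of c k f] Lop_poly[of c k g] by auto
  then show ?thesis using bez_no_common_root[OF cop, of c] by (auto simp: mult.commute)
qed


theorem corollary1p7:
  fixes av :: "'a::field \<Rightarrow> real"
    and red :: "'a \<Rightarrow> 'b::field"
    and f g :: "'a poly"
  assumes "nonarch_abs av" and "nontrivial_abs av" and "complete_abs av"
    and "alg_closed_field TYPE('a)"
    and "residue_map av red"
    and "CHAR('b) > 0"
    and "\<not> (\<exists>x. poly f x = 0 \<and> poly g x = 0)"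
    and "\<forall>i. av (coeff f i) \<le> 1" and "\<forall>i. av (coeff g i) \<le> 1"
    and "\<exists>i. av (coeff f i) = 1 \<or> av (coeff g i) = 1"
    and "max (degree f) (degree g) \<ge> 1"
    and "rat_deg (map_poly red f) (map_poly red g) = max (degree f) (degree g)"
    and "\<exists>c. \<forall>P \<in> crit_points f g. red_pt av red P = c"
  shows "max (degree f) (degree g) mod CHAR('b) = 0 \<or>
         max (degree f) (degree g) mod CHAR('b) = 1"
proof -
  interpret vr av red using assms(1,5) by unfold_locales
  define d where "d = max (degree f) (degree g)"
  have pr: "prime CHAR('b)" using prime_CHAR_semidom assms(6) by blast
  then have p1: "CHAR('b) > 1" by (rule prime_gt_1_nat)
  show ?thesis
  proof (cases "d = 1")
    case True
    then show ?thesis using p1 unfolding d_def by simp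
  next
    case False
    define k where "k = d - 2"
    have dk: "d = Suc (Suc k)" using False assms(11) unfolding k_def d_def by simp
    define ft where "ft = map_poly red f"
    define gt where "gt = map_poly red g"
    have okf: "okp f" and okg: "okp g" using assms(8,9) unfolding okp_def by auto
    have gt0: "gt \<noteq> 0"
    proof
      assume "gt = 0"
      then have "rat_deg ft gt = 0" by (simp add: rat_deg_def)
      then show False using assms(12) dk unfolding ft_def gt_def d_def by simp
    qed
    define S where "S = {degree h |h. h dvd ft \<and> h dvd gt}"
    have finS: "finite S"
    proof (rule finite_subset)
      show "S \<subseteq> {..degree gt}" unfolding S_def using dvd_imp_degree_le gt0 by auto
    qed auto
    have rd: "max (degree ft) (degree gt) - Max S = d"
      using assms(12) gt0 unfolding rat_deg_def ft_def gt_def S_def d_def by simp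
    have "degree ft \<le> degree f" "degree gt \<le> degree g" unfolding ft_def gt_def by (rule map_poly_degree_leq)+
    then have mle: "max (degree ft) (degree gt) \<le> d" unfolding d_def by auto
    have mt: "max (degree ft) (degree gt) = Suc (Suc k)" and M0: "Max S = 0" using rd mle dk by auto
    have cd: "\<forall>h. h dvd ft \<and> h dvd gt \<longrightarrow> degree h = 0"
    proof (intro allI impI)
      fix h assume "h dvd ft \<and> h dvd gt"
      then have "degree h \<in> S" unfolding S_def by auto
      then have "degree h \<le> Max S" by (rule Max_ge[OF finS])
      then show "degree h = 0" using M0 by simp
    qed
    obtain a b where cop: "a*ft + b*gt = 1" using bezout_field[OF gt0 cd] by blast
    define W where "W = pderiv f * g - f * pderiv g"
    define Wt where "Wt = pderiv ft * gt - ft * pderiv gt"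
    have okW: "okp W" unfolding W_def using okf okg by (intro okp_diff okp_mult okp_pderiv)
    have redW: "map_poly red W = Wt" unfolding W_def Wt_def ft_def gt_def
      using okf okg by (simp add: red_pdiff red_pmult red_pderiv okp_mult okp_pderiv)
    have key: "(of_nat ((k+1)*(k+2)) :: 'b) = 0"
    proof (cases "degree Wt = 0")
      case True
      then obtain a where "Wt = [:a:]" by (metis degree_eq_zeroE)
      then have "pderiv Wt = 0" by (simp add: pderiv_pCons)
      then show ?thesis using res_case1[OF cop mt] unfolding Wt_def by simp
    next
      case False
      have W0: "W \<noteq> 0" using False redW by auto
      have crit: "\<And>r. poly W r = 0 \<Longrightarrow> Some r \<in> crit_points f g"
        unfolding crit_points_def W_def using crit_of_root assms(7) by blast
      obtain c where hc: "\<forall>P\<in>crit_points f g. red_pt av red P = c" using assms(13) by blast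
      have "\<exists>r. poly W r = 0 \<and> av r \<le> 1"
      proof (rule ccontr)
        assume "\<not> ?thesis"
        then have big: "\<forall>r. poly W r = 0 \<longrightarrow> av r > 1" by auto
        have "\<forall>i>0. coeff Wt i = 0"
        proof (intro allI impI)
          fix i :: nat assume i: "i > 0"
          have "av (coeff W i) < av (coeff W 0)" using large_roots[OF assms(4) W0 big i] .
          also have "\<dots> \<le> 1" using okW unfolding okp_def by auto
          finally have "av (coeff W i) < 1" .
          then have "red (coeff W i) = 0" using red_zero_iff by simp
          then show "coeff Wt i = 0" using redW coeff_red by metis
        qed
        then have "degree Wt \<le> 0" by (rule degree_le)
        then show False using False by simp
      qed
      then obtain r0 where r0: "poly W r0 = 0" "av r0 \<le> 1" by blast
      have cc: "c = Some (red r0)" using hc crit[OF r0(1)] r0(2) unfolding red_pt_def by auto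
      have roots: "\<forall>r. poly W r = 0 \<longrightarrow> av r \<le> 1 \<and> red r = red r0"
      proof (intro allI impI)
        fix r assume "poly W r = 0"
        then have "red_pt av red (Some r) = Some (red r0)" using hc crit cc by blast
        then show "av r \<le> 1 \<and> red r = red r0" unfolding red_pt_def by (auto split: if_splits)
      qed
      have "None \<notin> crit_points f g" using hc cc unfolding red_pt_def by force
      then have nc: "\<not> crit_fin (at_infty d f) (at_infty d g) 0"
        unfolding crit_points_def d_def by (auto simp: Let_def split: if_splits)
      have df: "degree f \<le> Suc (Suc k)" and dg: "degree g \<le> Suc (Suc k)" using dk unfolding d_def by auto
      have lcd: "coeff f (k+2) \<noteq> 0 \<or> coeff g (k+2) \<noteq> 0"
        using max_deg_lc[of f g k] dk unfolding d_def by simp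
      have "coeff (at_infty d f) 1 * coeff (at_infty d g) 0 - coeff (at_infty d f) 0 * coeff (at_infty d g) 1 \<noteq> 0"
        using noncrit_0[OF nc] lcd by (simp add: coeff_at_infty dk)
      then have "coeff f (k+1) * coeff g (k+2) - coeff f (k+2) * coeff g (k+1) \<noteq> 0"
        by (simp add: coeff_at_infty dk)
      then have top: "coeff W (2*k+2) \<noteq> 0" unfolding W_def wr_top[OF df dg]
        by (simp add: algebra_simps)
      have "degree W \<le> 2*k+2" using wr_above[OF df dg] unfolding W_def[symmetric] by (intro degree_le) auto
      moreover have "2*k+2 \<le> degree W" using top by (rule le_degree)
      ultimately have dW: "degree W = 2*k+2" by simp
      obtain Q where Q: "W = smult (lead_coeff W) Q" "okp Q" "map_poly red Q = [:-red r0,1:]^degree W"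
        using small_roots[OF assms(4) W0 roots] by blast
      have "av (lead_coeff W) \<le> 1" using okW unfolding okp_def by auto
      then have "Wt = smult (red (lead_coeff W)) ([:-red r0,1:]^(2*k+2))"
        using red_smult[OF _ Q(2)] arg_cong[OF Q(1), of "map_poly red"] Q(3) redW dW by simp
      then show ?thesis using res_case2[OF cop mt] unfolding Wt_def by blast
    qed
    then have "CHAR('b) dvd (k+1)*(k+2)" by (simp only: of_nat_eq_0_iff_char_dvd)
    then have "CHAR('b) dvd k+1 \<or> CHAR('b) dvd k+2" using pr prime_dvd_mult_nat by blast
    then show ?thesis
    proof
      assume "CHAR('b) dvd k+2" then show ?thesis using dk unfolding d_def by simp
    next
      assume "CHAR('b) dvd k+1"
      then obtain q where "k+1 = CHAR('b) * q" by blast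
      then have "d = 1 + q * CHAR('b)" using dk by simp
      then have "d mod CHAR('b) = 1 mod CHAR('b)" by (simp only: mod_mult_self1)
      also have "\<dots> = 1" using p1 by simp
      finally show ?thesis unfolding d_def by simp
    qed
  qed
qed

end
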